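(* Let $P=P_1\times P_2$ with $P_1,P_2$ Cabanes $\ell$-groups, and let $A_i$ be the unique maximal abelian normal subgroup of $P_i$. Let $P_0$ be a normal subgroup of $P$ with $\pi_i(P_0)=P_i$ for $i=1,2$, where $\pi_i:P_1\times P_2\to P_i$ are the projections. Then $P_0$ is Cabanes, with unique maximal abelian normal subgroup $(A_1\times A_2)\cap P_0$.
   Context: An $\ell$-group is Cabanes if it has a unique maximal abelian normal subgroup. *)

theory Defs
  imports "HOL-Algebra.Algebra"
begin

definition l_group :: "('a, 'b) monoid_scheme \<Rightarrow> nat \<Rightarrow> bool" where
  "l_group G l \<longleftrightarrow> group G \<and> Factorial_Ring.prime l \<and> finite (carrier G) \<and> (\<exists>n. order G = l ^ n)"

definition abelian_subset :: "('a, 'b) monoid_scheme \<Rightarrow> 'a set \<Rightarrow> bool" where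
  "abelian_subset G A \<longleftrightarrow> (\<forall>x\<in>A. \<forall>y\<in>A. x \<otimes>\<^bsub>G\<^esub> y = y \<otimes>\<^bsub>G\<^esub> x)"

definition max_abelian_normal :: "('a, 'b) monoid_scheme \<Rightarrow> 'a set \<Rightarrow> bool" where
  "max_abelian_normal G A \<longleftrightarrow> A \<lhd> G \<and> abelian_subset G A \<and>
     (\<forall>B. B \<lhd> G \<and> abelian_subset G B \<and> A \<subseteq> B \<longrightarrow> B = A)"

definition cabanes :: "('a, 'b) monoid_scheme \<Rightarrow> bool" where
  "cabanes G \<longleftrightarrow> (\<exists>!A. max_abelian_normal G A)"

end

theory Submission
  imports Defs
begin

lemma contained_in_max:
  assumes fin: "finite (carrier G)" and cab: "cabanes G"
    and A: "max_abelian_normal G A" and B: "B \<lhd> G" and Bab: "abelian_subset G B"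
  shows "B \<subseteq> A"
proof -
  define S where "S = {C. C \<lhd> G \<and> abelian_subset G C \<and> B \<subseteq> C}"
  have "S \<subseteq> Pow (carrier G)" unfolding S_def
    using normal_imp_subgroup subgroup.subset by blast
  hence finS: "finite S" using fin by (meson finite_Pow_iff finite_subset)
  have "B \<in> S" unfolding S_def using B Bab by auto
  then obtain C where C: "C \<in> S" "\<forall>D\<in>S. C \<subseteq> D \<longrightarrow> C = D"
    using finite_has_maximal2[OF finS] by blast
  have "max_abelian_normal G C"
    unfolding max_abelian_normal_def using C unfolding S_def by blast
  hence "C = A" using cab A unfolding cabanes_def by blast
  thus ?thesis using C unfolding S_def by blast
qed

lemma image_normal_abelian:
  assumes grp: "group G1" and hgrp: "group H"
    and hom: "f \<in> hom H G1" and surj: "f ` carrier H = carrier G1"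
    and B: "B \<lhd> H" and Bab: "abelian_subset H B"
  shows "f ` B \<lhd> G1" "abelian_subset G1 (f ` B)"
proof -
  have gh: "group_hom H G1 f" using grp hgrp hom
    by (simp add: group_hom_def group_hom_axioms_def)
  show "f ` B \<lhd> G1" using normal.surj_hom_normal_subgroup[OF B gh surj] .
  have sub: "B \<subseteq> carrier H" using B normal_imp_subgroup subgroup.subset by blast
  show "abelian_subset G1 (f ` B)" unfolding abelian_subset_def
  proof (intro ballI)
    fix x y assume "x \<in> f ` B" "y \<in> f ` B"
    then obtain a b where ab: "a \<in> B" "b \<in> B" "x = f a" "y = f b" by blast
    have "x \<otimes>\<^bsub>G1\<^esub> y = f (a \<otimes>\<^bsub>H\<^esub> b)" using ab sub group_hom.hom_mult[OF gh, of a b] by (simp add: subsetD)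
    also have "\<dots> = f (b \<otimes>\<^bsub>H\<^esub> a)" using Bab ab unfolding abelian_subset_def by simp
    also have "\<dots> = y \<otimes>\<^bsub>G1\<^esub> x" using ab sub group_hom.hom_mult[OF gh, of b a] by (simp add: subsetD)
    finally show "x \<otimes>\<^bsub>G1\<^esub> y = y \<otimes>\<^bsub>G1\<^esub> x" .
  qed
qed

theorem mainTheorem16:
  fixes P1 :: "('a, 'c) monoid_scheme" and P2 :: "('b, 'd) monoid_scheme"
    and l :: nat and A1 :: "'a set" and A2 :: "'b set" and P0 :: "('a \<times> 'b) set"
  assumes "l_group P1 l" and "l_group P2 l"
    and "cabanes P1" and "cabanes P2"
    and "max_abelian_normal P1 A1" and "max_abelian_normal P2 A2"
    and "P0 \<lhd> (P1 \<times>\<times> P2)"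
    and "fst ` P0 = carrier P1" and "snd ` P0 = carrier P2"
  shows "cabanes ((P1 \<times>\<times> P2)\<lparr>carrier := P0\<rparr>)
    \<and> max_abelian_normal ((P1 \<times>\<times> P2)\<lparr>carrier := P0\<rparr>) ((A1 \<times> A2) \<inter> P0)"
proof -
  define H where "H = (P1 \<times>\<times> P2)\<lparr>carrier := P0\<rparr>"
  define A0 where "A0 = (A1 \<times> A2) \<inter> P0"
  have g1: "group P1" and g2: "group P2" and f1: "finite (carrier P1)" and f2: "finite (carrier P2)"
    using assms(1,2) unfolding l_group_def by auto
  have gP: "group (P1 \<times>\<times> P2)" using DirProd_group[OF g1 g2] .
  have subP0: "subgroup P0 (P1 \<times>\<times> P2)" using assms(7) normal_imp_subgroup by blast
  have P0c: "P0 \<subseteq> carrier P1 \<times> carrier P2" using subgroup.subset[OF subP0] by simp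
  have gH: "group H" unfolding H_def using subgroup.subgroup_is_group[OF subP0 gP] .
  have A1n: "A1 \<lhd> P1" and A1a: "abelian_subset P1 A1"
    using assms(5) unfolding max_abelian_normal_def by auto
  have A2n: "A2 \<lhd> P2" and A2a: "abelian_subset P2 A2"
    using assms(6) unfolding max_abelian_normal_def by auto
  have A12: "A1 \<times> A2 \<lhd> P1 \<times>\<times> P2" using group.DirProd_normal[OF g1 g2 A1n A2n] .
  have A0n: "A0 \<lhd> H" unfolding A0_def H_def
    using group.normal_Int_subgroup[OF gP subP0 A12] .
  have A0a: "abelian_subset H A0" unfolding abelian_subset_def A0_def H_def
    using A1a A2a unfolding abelian_subset_def by (auto simp: mult_DirProd')
  have hom1: "fst \<in> hom H P1" unfolding H_def hom_def using P0c by (auto simp: mult_DirProd')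
  have hom2: "snd \<in> hom H P2" unfolding H_def hom_def using P0c by (auto simp: mult_DirProd')
  have all: "B \<subseteq> A0" if B: "B \<lhd> H" and Ba: "abelian_subset H B" for B
  proof -
    have BP0: "B \<subseteq> P0" using B normal_imp_subgroup subgroup.subset unfolding H_def by fastforce
    have s1: "fst ` carrier H = carrier P1" using assms(8) unfolding H_def by simp
    have s2: "snd ` carrier H = carrier P2" using assms(9) unfolding H_def by simp
    have "fst ` B \<subseteq> A1"
      using contained_in_max[OF f1 assms(3) assms(5)] image_normal_abelian[OF g1 gH hom1 s1 B Ba] by blast
    moreover have "snd ` B \<subseteq> A2"
      using contained_in_max[OF f2 assms(4) assms(6)] image_normal_abelian[OF g2 gH hom2 s2 B Ba] by blast
    ultimately show ?thesis unfolding A0_def using BP0 by fastforce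
  qed
  have max: "max_abelian_normal H A0"
    unfolding max_abelian_normal_def using A0n A0a all by blast
  have "cabanes H" unfolding cabanes_def
  proof (rule ex1I[of _ A0])
    show "max_abelian_normal H A0" using max .
    fix M assume M: "max_abelian_normal H M"
    hence "M \<subseteq> A0" using all unfolding max_abelian_normal_def by blast
    thus "M = A0" using M A0n A0a unfolding max_abelian_normal_def by blast
  qed
  thus ?thesis using max unfolding H_def A0_def by blast
qed

end
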